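(* Let $N\in\mathbb{N}$, $s\in(0,1)$ with $N>2s$. Let $\mathcal{G}_{s,\infty}$ and $\mathcal{P}_{s,\infty}$ be the Green kernel and the Poisson kernel of $(-\Delta)^s$ in $\mathbb{R}^N_+$ given by $$\mathcal{G}_{s,\infty}(x,y)=\begin{cases}\frac{\kappa_{N,s}}{2}|x-y|^{2s-N}\int_0^{\frac{4x_1y_1}{|x-y|^2}}t^{s-1}(t+1)^{-\frac N2}dt, & x,y\in\mathbb{R}^N_+,\\ 0, & x\notin\mathbb{R}^N_+\text{ or }y\notin\mathbb{R}^N_+,\end{cases}$$ $$\mathcal{P}_{s,\infty}(x,y)=\mathcal{K}_s\Big(\frac{x_1}{-y_1}\Big)^s|x-y|^{-N},\quad x\in\mathbb{R}^N_+,\ y\in\mathbb{R}^N_-.$$ Let $\mathcal{P}_s(x)=\mathcal{K}_s|x|^{-N}x_1^s$ for $x\in\mathbb{R}^N_+$. Then, as $\epsilon\to0^+$, $$\epsilon^{-s}\mathcal{G}_{s,\infty}(\cdot,\epsilon e_1)\to\mathcal{P}_s\qquad\text{and}\qquad \epsilon^{s}\mathcal{P}_{s,\infty}(\cdot,-\epsilon e_1)\to\mathcal{P}_s,$$ both in $L^1_s(\mathbb{R}^N_+)$ and uniformly on every compact subset of $\mathbb{R}^N_+$.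
   Context: Write $x=(x_1,x')$, $\mathbb{R}^N_+=(0,\infty)\times\mathbb{R}^{N-1}$, $\mathbb{R}^N_-=(-\infty,0)\times\mathbb{R}^{N-1}$, $e_1=(1,0,\dots,0)$. Constants: $\kappa_{N,s}=\pi^{-(N/2+1)}\Gamma(N/2)\sin(\pi s)$ and $\mathcal{K}_s=\kappa_{N,s}2^{2s-1}s^{-1}$. Convergence $f_\epsilon\to f$ in $L^1_s(\mathbb{R}^N_+)$ means $\int_{\mathbb{R}^N_+}\frac{|f_\epsilon(x)-f(x)|}{1+|x|^{N+2s}}dx\to0$. *)

theory Defs
  imports "HOL-Analysis.Analysis"
begin

text \<open>Dimension N = DIM('a); the first coordinate x_1 is x \<bullet> e for a fixed
  basis vector e (e plays the role of e_1).\<close>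

definition kappa_Ns :: "real \<Rightarrow> real \<Rightarrow> real" where
  "kappa_Ns N s = pi powr (-(N/2 + 1)) * Gamma (N/2) * sin (pi * s)"

definition K_s :: "real \<Rightarrow> real \<Rightarrow> real" where
  "K_s N s = kappa_Ns N s * 2 powr (2 * s - 1) / s"

definition half_space :: "'a::euclidean_space \<Rightarrow> 'a set" where
  "half_space e = {x. x \<bullet> e > 0}"

definition neg_half_space :: "'a::euclidean_space \<Rightarrow> 'a set" where
  "neg_half_space e = {x. x \<bullet> e < 0}"

definition green_half :: "real \<Rightarrow> 'a::euclidean_space \<Rightarrow> 'a \<Rightarrow> 'a \<Rightarrow> real" where
  "green_half s e x y =
     (if x \<in> half_space e \<and> y \<in> half_space e then
        kappa_Ns (real DIM('a)) s / 2 * norm (x - y) powr (2 * s - real DIM('a)) *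
        integral {0 .. 4 * (x \<bullet> e) * (y \<bullet> e) / (norm (x - y))\<^sup>2}
          (\<lambda>t. t powr (s - 1) * (t + 1) powr (- real DIM('a) / 2))
      else 0)"

definition poisson_half :: "real \<Rightarrow> 'a::euclidean_space \<Rightarrow> 'a \<Rightarrow> 'a \<Rightarrow> real" where
  "poisson_half s e x y =
     (if x \<in> half_space e \<and> y \<in> neg_half_space e then
        K_s (real DIM('a)) s * ((x \<bullet> e) / (- (y \<bullet> e))) powr s * norm (x - y) powr (- real DIM('a))
      else 0)"

definition poisson_lim :: "real \<Rightarrow> 'a::euclidean_space \<Rightarrow> 'a \<Rightarrow> real" where
  "poisson_lim s e x = K_s (real DIM('a)) s * norm x powr (- real DIM('a)) * (x \<bullet> e) powr s"

definition L1s_conv_at_right0 :: "real \<Rightarrow> 'a::euclidean_space \<Rightarrow> (real \<Rightarrow> 'a \<Rightarrow> real) \<Rightarrow> ('a \<Rightarrow> real) \<Rightarrow> bool" where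
  "L1s_conv_at_right0 s e f g \<longleftrightarrow>
     ((\<lambda>\<epsilon>. \<integral>\<^sup>+ x. indicator (half_space e) x *
          ennreal (\<bar>f \<epsilon> x - g x\<bar> / (1 + norm x powr (real DIM('a) + 2 * s))) \<partial>lebesgue)
      \<longlongrightarrow> 0) (at_right 0)"

end

theory Submission
  imports Defs
begin

definition Ih :: "real \<Rightarrow> real \<Rightarrow> real \<Rightarrow> real" where
  "Ih s q a = integral {0..a} (\<lambda>t. t powr (s - 1) * (t + 1) powr q)"

lemma neg0: "negligible {0::real}" by simp

lemma powr_int_0:
  fixes s a :: real
  assumes "0 < s" "0 \<le> a"
  shows "((\<lambda>t. t powr (s - 1)) has_integral a powr s / s) {0..a}"
  using has_integral_powr_from_0[of "s-1" a] assms by simp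

lemma h_le: fixes q t :: real assumes "q \<le> 0" "0 \<le> t" shows "(t + 1) powr q \<le> 1"
  using powr_mono[of q 0 "t+1"] assms by simp

lemma h_integrable:
  fixes s q a :: real
  assumes "0 < s" "q \<le> 0" "0 \<le> a"
  shows "(\<lambda>t. t powr (s - 1) * (t + 1) powr q) integrable_on {0..a}"
proof -
  have i0: "(\<lambda>t. t powr (s-1)) integrable_on {0..a}"
    using powr_int_0[OF assms(1,3)] by blast
  have i: "(\<lambda>t. t powr (s-1)) integrable_on {0<..a}"
    by (rule integrable_spike_set[OF i0]) (auto intro: negligible_subset[OF neg0])
  have m: "(\<lambda>t. t powr (s - 1) * (t + 1) powr q) \<in> borel_measurable (lebesgue_on {0<..a})"
    by (intro continuous_imp_measurable_on_sets_lebesgue) (auto intro!: continuous_intros)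
  have "(\<lambda>t. t powr (s - 1) * (t + 1) powr q) integrable_on {0<..a}"
  proof (rule measurable_bounded_by_integrable_imp_integrable[OF m i])
    fix t :: real assume t: "t \<in> {0<..a}"
    have "(t + 1) powr q \<le> 1" using h_le[OF assms(2)] t by auto
    then show "norm (t powr (s - 1) * (t + 1) powr q) \<le> t powr (s - 1)"
      using t by (auto simp: abs_mult intro: mult_left_le)
  qed auto
  then show ?thesis
    by (rule integrable_spike_set) (auto intro: negligible_subset[OF neg0])
qed

lemma Ih_nonneg:
  fixes s q a :: real
  assumes "0 < s" "q \<le> 0" "0 \<le> a"
  shows "0 \<le> Ih s q a"
  unfolding Ih_def
  by (rule integral_nonneg[OF h_integrable[OF assms]]) auto

lemma Ih_upper:
  fixes s q a :: real
  assumes "0 < s" "q \<le> 0" "0 \<le> a"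
  shows "Ih s q a \<le> a powr s / s"
proof -
  have "Ih s q a \<le> integral {0..a} (\<lambda>t. t powr (s - 1))"
    unfolding Ih_def
  proof (rule integral_le[OF h_integrable[OF assms]])
    show "(\<lambda>t. t powr (s - 1)) integrable_on {0..a}" using powr_int_0[OF assms(1,3)] by blast
    fix t assume "t \<in> {0..a}"
    then show "t powr (s - 1) * (t + 1) powr q \<le> t powr (s - 1)"
      using h_le[OF assms(2), of t] by (auto intro: mult_left_le)
  qed
  also have "\<dots> = a powr s / s" using powr_int_0[OF assms(1,3)] by blast
  finally show ?thesis .
qed

lemma Ih_lower:
  fixes s q a :: real
  assumes "0 < s" "q \<le> 0" "0 \<le> a"
  shows "(1 + a) powr q * (a powr s / s) \<le> Ih s q a"
proof -
  have "integral {0..a} (\<lambda>t. (1 + a) powr q * t powr (s - 1)) \<le> Ih s q a"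
    unfolding Ih_def
  proof (rule integral_le[OF _ h_integrable[OF assms]])
    show "(\<lambda>t. (1 + a) powr q * t powr (s - 1)) integrable_on {0..a}"
      using has_integral_mult_right[OF powr_int_0[OF assms(1,3)], of "(1 + a) powr q"] by blast
    fix t assume t: "t \<in> {0..a}"
    have "(1 + a) powr q \<le> (t + 1) powr q" using t assms by (intro powr_mono2') auto
    then show "(1 + a) powr q * t powr (s - 1) \<le> t powr (s - 1) * (t + 1) powr q"
      by (simp add: mult.commute mult_left_mono)
  qed
  also have "integral {0..a} (\<lambda>t. (1 + a) powr q * t powr (s - 1)) = (1 + a) powr q * (a powr s / s)"
    using integral_unique[OF powr_int_0[OF assms(1,3)]] by simp
  finally show ?thesis .
qed

lemma powr_int_1:
  fixes p a :: real
  assumes "p \<noteq> -1" "1 \<le> a"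
  shows "((\<lambda>t. t powr p) has_integral (a powr (p + 1) / (p + 1) - 1 / (p + 1))) {1..a}"
proof -
  have "((\<lambda>t. t powr p) has_integral ((\<lambda>t. t powr (p + 1) / (p + 1)) a - (\<lambda>t. t powr (p + 1) / (p + 1)) 1)) {1..a}"
  proof (rule fundamental_theorem_of_calculus[OF assms(2)])
    fix x :: real assume x: "x \<in> {1..a}"
    have "((\<lambda>t. t powr (p + 1) / (p + 1)) has_real_derivative ((p + 1) * x powr (p + 1 - 1) / (p + 1))) (at x within {1..a})"
      using x by (auto intro!: derivative_eq_intros)
    then show "((\<lambda>t. t powr (p + 1) / (p + 1)) has_vector_derivative x powr p) (at x within {1..a})"
      using assms(1) by (simp add: has_real_derivative_iff_has_vector_derivative[symmetric])
  qed
  then show ?thesis by simp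
qed

lemma Ih_bound:
  fixes s q a :: real
  assumes "0 < s" "q \<le> 0" "s + q < 0" "0 \<le> a"
  shows "Ih s q a \<le> 1 / s + 1 / (- (s + q))"
proof (cases "a \<le> 1")
  case True
  have "Ih s q a \<le> a powr s / s" by (rule Ih_upper) (use assms in auto)
  also have "\<dots> \<le> 1 / s" using True assms by (intro divide_right_mono powr_le1) auto
  also have "\<dots> \<le> 1 / s + 1 / (- (s + q))" using assms by simp
  finally show ?thesis .
next
  case False
  let ?h = "\<lambda>t. t powr (s - 1) * (t + 1) powr q"
  have int: "?h integrable_on {0..a}" by (rule h_integrable) (use assms in auto)
  have "Ih s q a = integral {0..1} ?h + integral {1..a} ?h"
    unfolding Ih_def using False
    using Henstock_Kurzweil_Integration.integral_combine[where a=0 and c=1 and b=a and f="?h"] int by auto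
  also have "integral {0..1} ?h \<le> 1 / s"
    using Ih_upper[OF assms(1,2), of 1] by (simp add: Ih_def)
  also have "integral {1..a} ?h \<le> integral {1..a} (\<lambda>t. t powr (s - 1 + q))"
  proof (rule integral_le)
    show "?h integrable_on {1..a}" by (rule integrable_subinterval_real[OF int]) auto
    show "(\<lambda>t. t powr (s - 1 + q)) integrable_on {1..a}"
      using powr_int_1[of "s - 1 + q" a] assms False by auto
    fix t :: real assume t: "t \<in> {1..a}"
    have "(t + 1) powr q \<le> t powr q" using t assms by (intro powr_mono2') auto
    then show "?h t \<le> t powr (s - 1 + q)"
      using t by (simp add: powr_add mult_left_mono)
  qed
  also have "integral {1..a} (\<lambda>t. t powr (s - 1 + q)) = a powr (s + q) / (s + q) - 1 / (s + q)"
    using integral_unique[OF powr_int_1[of "s - 1 + q" a]] assms False by auto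
  also have "\<dots> \<le> 1 / (- (s + q))"
  proof -
    have "a powr (s + q) / (s + q) \<le> 0" using assms by (intro divide_nonneg_neg) auto
    then have "a powr (s + q) / (s + q) - 1 / (s + q) \<le> - 1 / (s + q)" by linarith
    also have "- 1 / (s + q) = 1 / (- (s + q))" by (metis divide_minus_left divide_minus_right)
    finally show ?thesis .
  qed
  finally show ?thesis by simp
qed

lemma Ih_cont:
  fixes s q M :: real
  assumes "0 < s" "q \<le> 0" "0 \<le> M"
  shows "continuous_on {0..M} (Ih s q)"
  unfolding Ih_def
  by (rule indefinite_integral_continuous_1[OF h_integrable[OF assms]])

definition J0 :: "real \<Rightarrow> real \<Rightarrow> real \<Rightarrow> real" where
  "J0 s q a = (if a = 0 then 1 else s * Ih s q a / a powr s)"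

lemma J0_bounds:
  fixes s q a :: real
  assumes "0 < s" "q \<le> 0" "0 \<le> a"
  shows "(1 + a) powr q \<le> J0 s q a" "J0 s q a \<le> 1"
proof -
  have "(1 + a) powr q \<le> J0 s q a \<and> J0 s q a \<le> 1"
  proof (cases "a = 0")
    case True then show ?thesis by (simp add: J0_def)
  next
    case False
    then have ap: "0 < a powr s" using assms by simp
    have u: "Ih s q a \<le> a powr s / s" by (rule Ih_upper[OF assms])
    have l: "(1 + a) powr q * (a powr s / s) \<le> Ih s q a" by (rule Ih_lower[OF assms])
    show ?thesis using False u l ap assms(1)
      by (auto simp add: J0_def divide_simps mult.commute mult.left_commute)
  qed
  then show "(1 + a) powr q \<le> J0 s q a" "J0 s q a \<le> 1" by auto
qed

lemma J0_cont:
  fixes s q M :: real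
  assumes "0 < s" "q \<le> 0" "0 \<le> M"
  shows "continuous_on {0..M} (J0 s q)"
proof (unfold continuous_on_eq_continuous_within, intro ballI)
  fix a assume a: "a \<in> {0..M}"
  show "continuous (at a within {0..M}) (J0 s q)"
  proof (cases "a = 0")
    case True
    have "(J0 s q \<longlongrightarrow> 1) (at 0 within {0..M})"
    proof (rule tendsto_sandwich)
      show "\<forall>\<^sub>F b in at 0 within {0..M}. (1 + b) powr q \<le> J0 s q b"
        using J0_bounds(1)[OF assms(1,2)] by (auto simp: eventually_at_filter)
      show "\<forall>\<^sub>F b in at 0 within {0..M}. J0 s q b \<le> 1"
        using J0_bounds(2)[OF assms(1,2)] by (auto simp: eventually_at_filter)
      have "((\<lambda>b. (1 + b) powr q) \<longlongrightarrow> (1 + 0) powr q) (at 0 within {0..M})"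
        by (intro tendsto_intros) auto
      then show "((\<lambda>b. (1 + b) powr q) \<longlongrightarrow> 1) (at 0 within {0..M})" by simp
    qed auto
    then show ?thesis using True by (simp add: continuous_within J0_def)
  next
    case False
    with a have apos: "0 < a" by auto
    have c1: "continuous (at a within {0..M}) (Ih s q)"
      using Ih_cont[OF assms] a by (simp add: continuous_on_eq_continuous_within)
    have "continuous (at a within {0..M}) (\<lambda>b. s * Ih s q b / b powr s)"
      using apos by (intro continuous_intros c1) auto
    then show ?thesis
    proof (rule continuous_transform_within[where \<delta> = a])
      fix b assume "b \<in> {0..M}" "dist b a < a"
      then have "b \<noteq> 0" by (auto simp: dist_real_def)
      then show "s * Ih s q b / b powr s = J0 s q b" by (simp add: J0_def)
    qed (use apos a in auto)
  qed
qed


lemma balls_bound: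
  fixes p :: "'a::euclidean_space" and f :: "'a \<Rightarrow> real"
  assumes pw: "\<And>x. ennreal (f x) \<le> (\<Sum>k. ennreal (c k * indicator (cball p (\<rho> k)) x))"
    and c: "\<And>k. 0 \<le> c k" and rho: "\<And>k. 0 \<le> \<rho> k"
    and sm: "summable (\<lambda>k. c k * (unit_ball_vol (real DIM('a)) * \<rho> k ^ DIM('a)))"
  shows "(\<integral>\<^sup>+x. ennreal (f x) \<partial>lborel) \<le> ennreal (\<Sum>k. c k * (unit_ball_vol (real DIM('a)) * \<rho> k ^ DIM('a)))"
proof -
  have "(\<integral>\<^sup>+x. ennreal (f x) \<partial>lborel) \<le> (\<integral>\<^sup>+x. (\<Sum>k. ennreal (c k * indicator (cball p (\<rho> k)) x)) \<partial>lborel)"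
    by (intro nn_integral_mono pw)
  also have "\<dots> = (\<Sum>k. \<integral>\<^sup>+x. ennreal (c k * indicator (cball p (\<rho> k)) x) \<partial>lborel)"
    by (rule nn_integral_suminf) (measurable, simp add: Measurable.pred_def borel_closed)
  also have "\<dots> = (\<Sum>k. ennreal (c k * (unit_ball_vol (real DIM('a)) * \<rho> k ^ DIM('a))))"
  proof (intro suminf_cong)
    fix k
    have "(\<integral>\<^sup>+x. ennreal (c k * indicator (cball p (\<rho> k)) x) \<partial>lborel)
        = (\<integral>\<^sup>+x. ennreal (c k) * indicator (cball p (\<rho> k)) x \<partial>lborel)"
      by (intro nn_integral_cong) (auto simp: indicator_def)
    also have "\<dots> = ennreal (c k) * emeasure lborel (cball p (\<rho> k))"
      by (rule nn_integral_cmult_indicator) simp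
    also have "\<dots> = ennreal (c k * (unit_ball_vol (real DIM('a)) * \<rho> k ^ DIM('a)))"
      using rho[of k] c[of k] by (simp add: emeasure_cball ennreal_mult)
    finally show "(\<integral>\<^sup>+x. ennreal (c k * indicator (cball p (\<rho> k)) x) \<partial>lborel)
        = ennreal (c k * (unit_ball_vol (real DIM('a)) * \<rho> k ^ DIM('a)))" .
  qed
  also have "\<dots> = ennreal (\<Sum>k. c k * (unit_ball_vol (real DIM('a)) * \<rho> k ^ DIM('a)))"
    using c rho sm by (intro suminf_ennreal2) (auto intro!: mult_nonneg_nonneg unit_ball_vol_nonneg)
  finally show ?thesis .
qed

lemma ennreal_le_suminf_term:
  fixes g :: "nat \<Rightarrow> ennreal"
  shows "g k \<le> (\<Sum>k. g k)"
  using sum_le_suminf[OF summableI, of "{k}" g] by simp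

lemma powr_pow_eq: fixes x a :: real assumes "0 < x" shows "(x powr a) ^ k = x powr (a * real k)"
  by (metis assms powr_gt_zero powr_powr powr_realpow)

lemma exists_dyadic_in:
  fixes d r :: real
  assumes "0 < d" "d \<le> r"
  shows "\<exists>k::nat. r * 2 powr (-(real k + 1)) < d \<and> d \<le> r * 2 powr (- real k)"
proof -
  define L where "L = log 2 (r / d)"
  have rd: "1 \<le> r / d" using assms by simp
  have L0: "0 \<le> L" unfolding L_def using rd by simp
  have L2: "2 powr L = r / d" unfolding L_def using rd by simp
  define k where "k = nat \<lfloor>L\<rfloor>"
  have k1: "real k \<le> L" unfolding k_def using L0 by linarith
  have k2: "L < real k + 1" unfolding k_def using L0 by linarith
  have "2 powr real k \<le> r / d" using k1 L2 by (metis powr_mono one_le_numeral)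
  then have a: "d \<le> r * 2 powr (- real k)"
    using assms by (simp add: powr_minus divide_simps mult.commute)
  have "r / d < 2 powr (real k + 1)" using k2 L2 by (metis powr_less_mono one_less_numeral_iff semiring_norm(76))
  then have "r / 2 powr (real k + 1) < d"
    using assms by (simp add: divide_simps mult.commute)
  moreover have "r * 2 powr (-(real k + 1)) = r / 2 powr (real k + 1)"
    by (subst powr_minus) (simp add: divide_inverse)
  ultimately have b: "r * 2 powr (-(real k + 1)) < d" by simp
  show ?thesis using a b by blast
qed

lemma exists_dyadic_out:
  fixes d r :: real
  assumes "0 < r" "r < d"
  shows "\<exists>k::nat. r * 2 powr real k < d \<and> d \<le> r * 2 powr (real k + 1)"
proof -
  define L where "L = log 2 (d / r)"
  have rd: "1 < d / r" using assms by simp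
  have L0: "0 < L" unfolding L_def using rd by simp
  have L2: "2 powr L = d / r" unfolding L_def using rd assms by simp
  define k where "k = nat (\<lceil>L\<rceil> - 1)"
  have k1: "real k < L" unfolding k_def using L0 by linarith
  have k2: "L \<le> real k + 1" unfolding k_def using L0 by linarith
  have "2 powr real k < d / r" using k1 L2 by (metis powr_less_mono one_less_numeral_iff semiring_norm(76))
  then have a: "r * 2 powr real k < d"
    using assms by (simp add: divide_simps mult.commute)
  have "d / r \<le> 2 powr (real k + 1)" using k2 L2 by (metis powr_mono one_le_numeral)
  then have b: "d \<le> r * 2 powr (real k + 1)"
    using assms by (simp add: divide_simps mult.commute)
  show ?thesis using a b by blast
qed

lemma shell_in:
  fixes p :: "'a::euclidean_space" and \<alpha> r :: real
  assumes al: "0 < \<alpha>" "\<alpha> < real DIM('a)" and r: "0 < r"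
  shows "(\<integral>\<^sup>+x. ennreal (indicator (cball p r) x * norm (x - p) powr (-\<alpha>)) \<partial>lborel)
    \<le> ennreal (unit_ball_vol (real DIM('a)) * 2 powr \<alpha> * r powr (real DIM('a) - \<alpha>)
         / (1 - 2 powr (\<alpha> - real DIM('a))))"
proof -
  define N where "N = real DIM('a)"
  define V where "V = unit_ball_vol N"
  define c where "c k = (r * 2 powr (-(real k + 1))) powr (-\<alpha>)" for k :: nat
  define \<rho> where "\<rho> k = r * 2 powr (- real k)" for k :: nat
  define A where "A = V * 2 powr \<alpha> * r powr (N - \<alpha>)"
  define q where "q = (2::real) powr (\<alpha> - N)"
  have q: "0 < q" "q < 1" unfolding q_def N_def
    using al powr_less_mono[of "\<alpha> - real DIM('a)" 0 2] by auto
  have trm: "c k * (V * \<rho> k ^ DIM('a)) = A * q ^ k" for k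
  proof -
    have "c k = r powr (-\<alpha>) * 2 powr (\<alpha> * (real k + 1))"
      unfolding c_def using r by (simp add: powr_mult powr_powr algebra_simps)
    moreover have "\<rho> k ^ DIM('a) = r powr N * 2 powr (- real k * N)"
      unfolding \<rho>_def N_def using r
      by (simp add: power_mult_distrib powr_pow_eq powr_realpow[symmetric] mult.commute powr_powr)
    moreover have "q ^ k = 2 powr ((\<alpha> - N) * real k)" unfolding q_def by (simp add: powr_pow_eq)
    ultimately have "c k * (V * \<rho> k ^ DIM('a)) = V * (r powr (-\<alpha>) * r powr N) * (2 powr (\<alpha> * (real k + 1)) * 2 powr (- real k * N))"
      "A * q ^ k = V * r powr (N - \<alpha>) * (2 powr \<alpha> * 2 powr ((\<alpha> - N) * real k))"
      unfolding A_def by (simp_all add: algebra_simps)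
    moreover have "r powr (-\<alpha>) * r powr N = r powr (N - \<alpha>)" by (simp add: powr_add[symmetric])
    moreover have "2 powr (\<alpha> * (real k + 1)) * 2 powr (- real k * N) = 2 powr \<alpha> * 2 powr ((\<alpha> - N) * real k)"
      by (simp add: powr_add[symmetric] algebra_simps)
    ultimately show ?thesis by simp
  qed
  have sm: "summable (\<lambda>k. c k * (V * \<rho> k ^ DIM('a)))"
    unfolding trm using q by (intro summable_mult summable_geometric) auto
  have sv: "(\<Sum>k. c k * (V * \<rho> k ^ DIM('a))) = A / (1 - q)"
    unfolding trm using q by (simp add: suminf_mult suminf_geometric)
  have "(\<integral>\<^sup>+x. ennreal (indicator (cball p r) x * norm (x - p) powr (-\<alpha>)) \<partial>lborel)
     \<le> ennreal (\<Sum>k. c k * (unit_ball_vol (real DIM('a)) * \<rho> k ^ DIM('a)))"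
  proof (rule balls_bound)
    show "0 \<le> c k" "0 \<le> \<rho> k" for k unfolding c_def \<rho>_def using r by auto
    show "summable (\<lambda>k. c k * (unit_ball_vol (real DIM('a)) * \<rho> k ^ DIM('a)))"
      using sm by (simp add: V_def N_def)
    fix x :: 'a
    show "ennreal (indicator (cball p r) x * norm (x - p) powr - \<alpha>)
        \<le> (\<Sum>k. ennreal (c k * indicator (cball p (\<rho> k)) x))"
    proof (cases "x \<in> cball p r \<and> x \<noteq> p")
      case True
      define d where "d = norm (x - p)"
      have d: "0 < d" "d \<le> r" using True by (auto simp: d_def dist_norm norm_minus_commute)
      obtain k :: nat where k: "r * 2 powr (-(real k + 1)) < d" "d \<le> r * 2 powr (- real k)"
        using exists_dyadic_in[OF d] by blast
      have "ennreal (indicator (cball p r) x * norm (x - p) powr - \<alpha>) = ennreal (d powr - \<alpha>)"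
        using True by (simp add: d_def)
      also have "\<dots> \<le> ennreal (c k * indicator (cball p (\<rho> k)) x)"
      proof -
        have "x \<in> cball p (\<rho> k)" using k(2) by (simp add: \<rho>_def d_def dist_norm norm_minus_commute)
        moreover have "d powr - \<alpha> \<le> c k" unfolding c_def
          using k(1) al r by (intro powr_mono2') auto
        ultimately show ?thesis by (intro ennreal_leI) simp
      qed
      also have "\<dots> \<le> (\<Sum>k. ennreal (c k * indicator (cball p (\<rho> k)) x))"
        by (rule ennreal_le_suminf_term)
      finally show ?thesis .
    next
      case False
      then have z: "indicator (cball p r) x * norm (x - p) powr - \<alpha> = 0" by (auto simp: indicator_def)
      show ?thesis by (subst z) simp
    qed
  qed
  also have "(\<Sum>k. c k * (unit_ball_vol (real DIM('a)) * \<rho> k ^ DIM('a))) = A / (1 - q)"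
    using sv by (simp add: V_def N_def)
  finally show ?thesis by (simp add: A_def q_def V_def N_def)
qed

lemma shell_out:
  fixes p :: "'a::euclidean_space" and \<beta> r :: real
  assumes be: "real DIM('a) < \<beta>" and r: "0 < r"
  shows "(\<integral>\<^sup>+x. ennreal (indicator (- cball p r) x * norm (x - p) powr (-\<beta>)) \<partial>lborel)
    \<le> ennreal (unit_ball_vol (real DIM('a)) * 2 powr real DIM('a) * r powr (real DIM('a) - \<beta>)
         / (1 - 2 powr (real DIM('a) - \<beta>)))"
proof -
  define N where "N = real DIM('a)"
  define V where "V = unit_ball_vol N"
  define c where "c k = (r * 2 powr real k) powr (-\<beta>)" for k :: nat
  define \<rho> where "\<rho> k = r * 2 powr (real k + 1)" for k :: nat
  define A where "A = V * 2 powr N * r powr (N - \<beta>)"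
  define q where "q = (2::real) powr (N - \<beta>)"
  have q: "0 < q" "q < 1" unfolding q_def N_def
    using be powr_less_mono[of "real DIM('a) - \<beta>" 0 2] by auto
  have trm: "c k * (V * \<rho> k ^ DIM('a)) = A * q ^ k" for k
  proof -
    have "c k = r powr (-\<beta>) * 2 powr (- \<beta> * real k)"
      unfolding c_def using r by (simp add: powr_mult powr_powr algebra_simps)
    moreover have "\<rho> k ^ DIM('a) = r powr N * 2 powr ((real k + 1) * N)"
      unfolding \<rho>_def N_def using r
      by (simp add: power_mult_distrib powr_pow_eq powr_realpow[symmetric] mult.commute powr_powr)
    moreover have "q ^ k = 2 powr ((N - \<beta>) * real k)" unfolding q_def by (simp add: powr_pow_eq)
    ultimately have "c k * (V * \<rho> k ^ DIM('a)) = V * (r powr (-\<beta>) * r powr N) * (2 powr (- \<beta> * real k) * 2 powr ((real k + 1) * N))"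
      "A * q ^ k = V * r powr (N - \<beta>) * (2 powr N * 2 powr ((N - \<beta>) * real k))"
      unfolding A_def by (simp_all add: algebra_simps)
    moreover have "r powr (-\<beta>) * r powr N = r powr (N - \<beta>)" by (simp add: powr_add[symmetric])
    moreover have "2 powr (- \<beta> * real k) * 2 powr ((real k + 1) * N) = 2 powr N * 2 powr ((N - \<beta>) * real k)"
      by (simp add: powr_add[symmetric] algebra_simps)
    ultimately show ?thesis by simp
  qed
  have sm: "summable (\<lambda>k. c k * (V * \<rho> k ^ DIM('a)))"
    unfolding trm using q by (intro summable_mult summable_geometric) auto
  have sv: "(\<Sum>k. c k * (V * \<rho> k ^ DIM('a))) = A / (1 - q)"
    unfolding trm using q by (simp add: suminf_mult suminf_geometric)
  have "(\<integral>\<^sup>+x. ennreal (indicator (- cball p r) x * norm (x - p) powr (-\<beta>)) \<partial>lborel)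
     \<le> ennreal (\<Sum>k. c k * (unit_ball_vol (real DIM('a)) * \<rho> k ^ DIM('a)))"
  proof (rule balls_bound)
    show "0 \<le> c k" "0 \<le> \<rho> k" for k unfolding c_def \<rho>_def using r by auto
    show "summable (\<lambda>k. c k * (unit_ball_vol (real DIM('a)) * \<rho> k ^ DIM('a)))"
      using sm by (simp add: V_def N_def)
    fix x :: 'a
    show "ennreal (indicator (- cball p r) x * norm (x - p) powr - \<beta>)
        \<le> (\<Sum>k. ennreal (c k * indicator (cball p (\<rho> k)) x))"
    proof (cases "x \<notin> cball p r")
      case True
      define d where "d = norm (x - p)"
      have d: "0 < r" "r < d" using True r by (auto simp: d_def dist_norm norm_minus_commute)
      obtain k :: nat where k: "r * 2 powr real k < d" "d \<le> r * 2 powr (real k + 1)"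
        using exists_dyadic_out[OF d] by blast
      have "ennreal (indicator (- cball p r) x * norm (x - p) powr - \<beta>) = ennreal (d powr - \<beta>)"
        using True by (simp add: d_def)
      also have "\<dots> \<le> ennreal (c k * indicator (cball p (\<rho> k)) x)"
      proof -
        have "x \<in> cball p (\<rho> k)" using k(2) by (simp add: \<rho>_def d_def dist_norm norm_minus_commute)
        moreover have "d powr - \<beta> \<le> c k" unfolding c_def
          using k(1) be r by (intro powr_mono2') auto
        ultimately show ?thesis by (intro ennreal_leI) simp
      qed
      also have "\<dots> \<le> (\<Sum>k. ennreal (c k * indicator (cball p (\<rho> k)) x))"
        by (rule ennreal_le_suminf_term)
      finally show ?thesis .
    next
      case False
      then have z: "indicator (- cball p r) x * norm (x - p) powr - \<beta> = 0" by (auto simp: indicator_def)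
      show ?thesis by (subst z) simp
    qed
  qed
  also have "(\<Sum>k. c k * (unit_ball_vol (real DIM('a)) * \<rho> k ^ DIM('a))) = A / (1 - q)"
    using sv by (simp add: V_def N_def)
  finally show ?thesis by (simp add: A_def q_def V_def N_def)
qed


lemma unif_from_cont:
  fixes F :: "real \<times> 'a::metric_space \<Rightarrow> real" and f :: "real \<Rightarrow> 'a \<Rightarrow> real"
  assumes C: "compact C" and d: "0 < d" and cont: "continuous_on ({0..d} \<times> C) F"
    and fF: "\<And>\<epsilon> x. \<epsilon> \<in> {0<..d} \<Longrightarrow> x \<in> C \<Longrightarrow> f \<epsilon> x = F (\<epsilon>, x)"
    and gF: "\<And>x. x \<in> C \<Longrightarrow> g x = F (0, x)"
  shows "uniform_limit C f g (at_right 0)"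
proof -
  have uc: "uniformly_continuous_on ({0..d} \<times> C) F"
    by (intro compact_uniformly_continuous cont compact_Times C compact_Icc)
  show ?thesis unfolding uniform_limit_iff
  proof (intro allI impI)
    fix \<eta> :: real assume \<eta>: "0 < \<eta>"
    obtain \<delta> where \<delta>: "0 < \<delta>" and hd: "\<And>p p'. p \<in> {0..d} \<times> C \<Longrightarrow> p' \<in> {0..d} \<times> C \<Longrightarrow> dist p' p < \<delta> \<Longrightarrow> dist (F p') (F p) < \<eta>"
      using uc \<eta> unfolding uniformly_continuous_on_def by metis
    have "0 < min \<delta> d" using \<delta> d by auto
    have ev: "\<forall>\<^sub>F \<epsilon> in at_right 0. 0 < \<epsilon> \<and> \<epsilon> < min \<delta> d"
      using eventually_at_right_real[OF \<open>0 < min \<delta> d\<close>] by (rule eventually_mono) auto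
    show "\<forall>\<^sub>F \<epsilon> in at_right 0. \<forall>x\<in>C. dist (f \<epsilon> x) (g x) < \<eta>"
      using ev
    proof eventually_elim
      case (elim \<epsilon>)
      show ?case
      proof
        fix x assume x: "x \<in> C"
        have "dist (F (\<epsilon>, x)) (F (0, x)) < \<eta>"
          using elim x by (intro hd) (auto simp: dist_Pair_Pair)
        then show "dist (f \<epsilon> x) (g x) < \<eta>" using fF gF x elim by auto
      qed
    qed
  qed
qed

lemma ennreal_tendsto_0_crit:
  fixes \<Phi> :: "real \<Rightarrow> ennreal"
  assumes "\<And>\<eta>. 0 < \<eta> \<Longrightarrow> \<forall>\<^sub>F \<epsilon> in F. \<Phi> \<epsilon> \<le> ennreal (3 * \<eta>)"
  shows "(\<Phi> \<longlongrightarrow> 0) F"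
proof (rule order_tendstoI)
  fix a :: ennreal assume "a < 0" then show "\<forall>\<^sub>F x in F. a < \<Phi> x" by simp
next
  fix a :: ennreal assume a: "0 < a"
  obtain b where b: "0 < b" "b < a" using dense[OF a] by blast
  then have "b \<noteq> top" using top_greatest[of a] by auto
  then obtain \<eta> where \<eta>: "b = ennreal \<eta>" "0 \<le> \<eta>" by (cases b) auto
  with b have "0 < \<eta> / 3" by auto
  from assms[OF this] show "\<forall>\<^sub>F x in F. \<Phi> x < a"
    by eventually_elim (use b \<eta> in auto)
qed

lemma half_space_open: "open (half_space (e::'a::euclidean_space))"
proof -
  have "half_space e = {x. inner e x > 0}" by (auto simp: half_space_def inner_commute)
  then show ?thesis by (simp add: open_halfspace_gt)
qed

lemma L1s_generic:
  fixes s :: real and e :: "'a::euclidean_space" and f :: "real \<Rightarrow> 'a \<Rightarrow> real"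
    and g G :: "'a \<Rightarrow> real" and E :: "real \<Rightarrow> 'a \<Rightarrow> real"
  assumes G_meas: "G \<in> borel_measurable borel" and G_nn: "\<And>x. 0 \<le> G x"
    and G_int: "(\<integral>\<^sup>+x. ennreal (indicator (half_space e) x * G x) \<partial>lborel) < \<infinity>"
    and unif: "\<And>C. compact C \<Longrightarrow> C \<subseteq> half_space e \<Longrightarrow> uniform_limit C f g (at_right 0)"
    and dom: "\<forall>\<^sub>F \<epsilon> in at_right 0. \<forall>x\<in>half_space e.
        \<bar>f \<epsilon> x - g x\<bar> / (1 + norm x powr (real DIM('a) + 2 * s)) \<le> G x + E \<epsilon> x"
    and E_nn: "\<And>\<epsilon> x. 0 \<le> E \<epsilon> x"
    and E_meas: "\<And>\<epsilon>. E \<epsilon> \<in> borel_measurable borel"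
    and E_lim: "((\<lambda>\<epsilon>. \<integral>\<^sup>+x. ennreal (E \<epsilon> x) \<partial>lborel) \<longlongrightarrow> 0) (at_right 0)"
  shows "L1s_conv_at_right0 s e f g"
proof -
  define H where "H = half_space e"
  define w where "w x = 1 + norm x powr (real DIM('a) + 2 * s)" for x :: 'a
  have w1: "1 \<le> w x" for x unfolding w_def by simp
  have Hb: "H \<in> sets borel" unfolding H_def by (rule borel_open[OF half_space_open])
  define K where "K n = {x. 1 / real (Suc n) \<le> x \<bullet> e} \<inter> cball 0 (real (Suc n))" for n
  define T where "T n = H - K n" for n
  have Kc: "compact (K n)" for n
  proof -
    have "closed {x::'a. 1 / real (Suc n) \<le> x \<bullet> e}"
      using closed_halfspace_ge[of "1 / real (Suc n)" e] by (simp add: inner_commute)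
    then show ?thesis unfolding K_def
      by (rule closed_Int_compact[OF _ compact_cball])
  qed
  have KH: "K n \<subseteq> H" for n
  proof
    fix x assume "x \<in> K n"
    then have "1 / real (Suc n) \<le> x \<bullet> e" by (simp add: K_def)
    moreover have "0 < 1 / real (Suc n)" by simp
    ultimately have "0 < x \<bullet> e" by linarith
    then show "x \<in> H" by (simp add: H_def half_space_def)
  qed
  have Kb: "K n \<in> sets borel" for n using Kc[of n] by (simp add: borel_compact)
  have Tb: "T n \<in> sets borel" for n unfolding T_def using Hb Kb by auto
  have tail: "(\<lambda>n. \<integral>\<^sup>+x. ennreal (indicator (T n) x * G x) \<partial>lborel) \<longlonglongrightarrow> (\<integral>\<^sup>+x. 0 \<partial>(lborel :: 'a measure))"
  proof (rule nn_integral_dominated_convergence[where u' = "\<lambda>x. 0" and u = "\<lambda>n x. ennreal (indicator (T n) x * G x)" and w = "\<lambda>x. ennreal (indicator H x * G x)"])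
    show "(\<lambda>x. ennreal (indicator (T n) x * G x)) \<in> borel_measurable lborel" for n
      using Tb G_meas by measurable
    show "(\<lambda>x. ennreal (indicator H x * G x)) \<in> borel_measurable lborel"
      using Hb G_meas by measurable
    show "(\<lambda>x. 0) \<in> borel_measurable lborel" by simp
    show "AE x in lborel. ennreal (indicator (T n) x * G x) \<le> ennreal (indicator H x * G x)" for n
      using G_nn by (intro AE_I2 ennreal_leI) (auto simp: T_def indicator_def)
    show "(\<integral>\<^sup>+x. ennreal (indicator H x * G x) \<partial>lborel) < \<infinity>" using G_int by (simp add: H_def)
    show "AE x in lborel. (\<lambda>n. ennreal (indicator (T n) x * G x)) \<longlonglongrightarrow> 0"
    proof (intro AE_I2)
      fix x :: 'a
      show "(\<lambda>n. ennreal (indicator (T n) x * G x)) \<longlonglongrightarrow> 0"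
      proof (cases "x \<in> H")
        case False
        then show ?thesis by (simp add: T_def)
      next
        case True
        then have x1: "0 < x \<bullet> e" by (simp add: H_def half_space_def)
        obtain n1 :: nat where n1: "inverse (real (Suc n1)) < x \<bullet> e" using reals_Archimedean[OF x1] by blast
        obtain n2 :: nat where n2: "norm x \<le> real n2" using real_arch_simple by blast
        have "\<forall>\<^sub>F n in sequentially. ennreal (indicator (T n) x * G x) = 0"
          unfolding eventually_sequentially
        proof (intro exI[of _ "max n1 n2"] allI impI)
          fix n assume n: "max n1 n2 \<le> n"
          have "1 / real (Suc n) \<le> inverse (real (Suc n1))"
            using n by (simp add: divide_simps)
          moreover have "norm x \<le> real (Suc n)" using n n2 by linarith
          ultimately have "x \<in> K n" using n1 by (simp add: K_def)
          then show "ennreal (indicator (T n) x * G x) = 0" by (simp add: T_def)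
        qed
        then show ?thesis by (rule tendsto_eventually)
      qed
    qed
  qed
  then have tail0: "(\<lambda>n. \<integral>\<^sup>+x. ennreal (indicator (T n) x * G x) \<partial>lborel) \<longlonglongrightarrow> 0" by simp
  have "((\<lambda>\<epsilon>. \<integral>\<^sup>+x. indicator H x * ennreal (\<bar>f \<epsilon> x - g x\<bar> / w x) \<partial>lborel) \<longlongrightarrow> 0) (at_right 0)"
  proof (rule ennreal_tendsto_0_crit)
    fix \<eta> :: real assume \<eta>: "0 < \<eta>"
    obtain n where n: "(\<integral>\<^sup>+x. ennreal (indicator (T n) x * G x) \<partial>lborel) < ennreal \<eta>"
      using order_tendstoD(2)[OF tail0, of "ennreal \<eta>"] \<eta> by (auto simp: eventually_sequentially)
    define vol where "vol = unit_ball_vol (real DIM('a)) * real (Suc n) ^ DIM('a)"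
    have vol0: "0 \<le> vol" unfolding vol_def by (simp add: unit_ball_vol_nonneg)
    define \<eta>2 where "\<eta>2 = \<eta> / (1 + vol)"
    have \<eta>2: "0 < \<eta>2" using \<eta> vol0 by (simp add: \<eta>2_def)
    have Kint: "(\<integral>\<^sup>+x. ennreal (\<eta>2 * indicator (K n) x) \<partial>lborel) \<le> ennreal \<eta>"
    proof -
      have "(\<integral>\<^sup>+x. ennreal (\<eta>2 * indicator (K n) x) \<partial>lborel) = (\<integral>\<^sup>+x. ennreal \<eta>2 * indicator (K n) x \<partial>lborel)"
        by (intro nn_integral_cong) (auto simp: indicator_def)
      also have "\<dots> = ennreal \<eta>2 * emeasure lborel (K n)"
        using Kb by (intro nn_integral_cmult_indicator) auto
      also have "\<dots> \<le> ennreal \<eta>2 * emeasure lborel (cball (0::'a) (real (Suc n)))"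
        by (intro mult_left_mono emeasure_mono) (auto simp: K_def)
      also have "\<dots> = ennreal (\<eta>2 * vol)"
        using \<eta>2 vol0 by (simp add: emeasure_cball vol_def ennreal_mult)
      also have "\<eta>2 * vol \<le> \<eta>"
        using \<eta> vol0 by (simp add: \<eta>2_def divide_simps)
      finally show ?thesis by (simp add: ennreal_leI)
    qed
    have ev_unif: "\<forall>\<^sub>F \<epsilon> in at_right 0. \<forall>x\<in>K n. dist (f \<epsilon> x) (g x) < \<eta>2"
      using unif[OF Kc KH[unfolded H_def]] \<eta>2 unfolding uniform_limit_iff by blast
    have ev_E: "\<forall>\<^sub>F \<epsilon> in at_right 0. (\<integral>\<^sup>+x. ennreal (E \<epsilon> x) \<partial>lborel) < ennreal \<eta>"
      using order_tendstoD(2)[OF E_lim, of "ennreal \<eta>"] \<eta> by auto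
    show "\<forall>\<^sub>F \<epsilon> in at_right 0. (\<integral>\<^sup>+x. indicator H x * ennreal (\<bar>f \<epsilon> x - g x\<bar> / w x) \<partial>lborel) \<le> ennreal (3 * \<eta>)"
      using ev_unif ev_E dom
    proof eventually_elim
      case (elim \<epsilon>)
      have pw: "indicator H x * ennreal (\<bar>f \<epsilon> x - g x\<bar> / w x)
          \<le> ennreal (\<eta>2 * indicator (K n) x) + ennreal (indicator (T n) x * G x) + ennreal (E \<epsilon> x)" for x
      proof (cases "x \<in> H")
        case False then show ?thesis by simp
      next
        case True
        have "\<bar>f \<epsilon> x - g x\<bar> / w x \<le> \<eta>2 * indicator (K n) x + indicator (T n) x * G x + E \<epsilon> x"
        proof (cases "x \<in> K n")
          case True
          have "\<bar>f \<epsilon> x - g x\<bar> / w x \<le> \<bar>f \<epsilon> x - g x\<bar>"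
            using w1[of x] by (simp add: divide_simps mult_le_cancel_left1)
          also have "\<dots> < \<eta>2" using elim(1) True by (auto simp: dist_real_def)
          finally show ?thesis using True E_nn[of \<epsilon> x] G_nn[of x] by (simp add: T_def)
        next
          case False
          then show ?thesis using elim(3) \<open>x \<in> H\<close> by (auto simp: T_def w_def H_def)
        qed
        then show ?thesis using True \<eta>2 G_nn[of x] E_nn[of \<epsilon> x]
          by (simp add: ennreal_plus[symmetric] ennreal_leI del: ennreal_plus)
      qed
      have "(\<integral>\<^sup>+x. indicator H x * ennreal (\<bar>f \<epsilon> x - g x\<bar> / w x) \<partial>lborel)
          \<le> (\<integral>\<^sup>+x. ennreal (\<eta>2 * indicator (K n) x) + ennreal (indicator (T n) x * G x) + ennreal (E \<epsilon> x) \<partial>lborel)"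
        by (intro nn_integral_mono pw)
      also have "\<dots> = (\<integral>\<^sup>+x. ennreal (\<eta>2 * indicator (K n) x) \<partial>lborel) + (\<integral>\<^sup>+x. ennreal (indicator (T n) x * G x) \<partial>lborel)
           + (\<integral>\<^sup>+x. ennreal (E \<epsilon> x) \<partial>lborel)"
        using Kb Tb G_meas E_meas[of \<epsilon>]
        by (subst nn_integral_add, measurable, subst nn_integral_add, measurable)
      also have "\<dots> \<le> ennreal \<eta> + ennreal \<eta> + ennreal \<eta>"
        using Kint n elim(2) by (intro add_mono) auto
      also have "\<dots> = ennreal (3 * \<eta>)" using \<eta> by (simp add: ennreal_plus[symmetric] del: ennreal_plus)
      finally show ?case .
    qed
  qed
  then have "((\<lambda>\<epsilon>. \<integral>\<^sup>+x. indicator H x * ennreal (\<bar>f \<epsilon> x - g x\<bar> / w x) \<partial>lebesgue) \<longlongrightarrow> 0) (at_right 0)"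
    by (simp add: nn_integral_completion)
  then show ?thesis unfolding L1s_conv_at_right0_def H_def w_def .
qed


lemma basis_inner_self: "e \<in> Basis \<Longrightarrow> e \<bullet> e = 1"
  by (simp add: inner_Basis)

lemma kappa_pos:
  assumes "0 < s" "s < 1" "0 < N"
  shows "0 < kappa_Ns N s"
proof -
  have "0 < Gamma (N / 2)" using assms by (intro Gamma_real_pos) simp
  moreover have "0 < sin (pi * s)" using assms by (intro sin_gt_zero) auto
  ultimately show ?thesis unfolding kappa_Ns_def by simp
qed

lemma K_pos:
  assumes "0 < s" "s < 1" "0 < N"
  shows "0 < K_s N s"
  using kappa_pos[OF assms] assms unfolding K_s_def by simp

lemma K_eq: "K_s N s = kappa_Ns N s / 2 * 4 powr s / s"
proof -
  have h: "(4::real) powr s = 2 * 2 powr (2 * s - 1)"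
  proof -
    have "(2::real) powr (2 * s - 1) = 2 powr (2 * s) / 2" by (simp add: powr_diff)
    also have "(2::real) powr (2 * s) = 4 powr s" using powr_powr[of 2 2 s] by simp
    finally show ?thesis by simp
  qed
  show ?thesis unfolding K_s_def h by simp
qed

lemma norm_plus_ge:
  fixes x e :: "'a::euclidean_space"
  assumes "e \<in> Basis" "0 \<le> x \<bullet> e" "0 \<le> \<epsilon>"
  shows "norm x \<le> norm (x + \<epsilon> *\<^sub>R e)"
proof -
  have "x \<bullet> x \<le> (x + \<epsilon> *\<^sub>R e) \<bullet> (x + \<epsilon> *\<^sub>R e)"
    using assms by (simp add: inner_add_left inner_add_right basis_inner_self inner_commute)
  then show ?thesis by (simp add: norm_le)
qed

lemma pois_formula:
  fixes x e :: "'a::euclidean_space"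
  assumes e: "e \<in> Basis" and \<epsilon>: "0 < \<epsilon>" and x: "x \<in> half_space e"
  shows "\<epsilon> powr s * poisson_half s e x (- (\<epsilon> *\<^sub>R e))
    = K_s (real DIM('a)) s * (x \<bullet> e) powr s * norm (x + \<epsilon> *\<^sub>R e) powr (- real DIM('a))"
proof -
  have ee: "e \<bullet> e = 1" using e by (rule basis_inner_self)
  have x1: "0 < x \<bullet> e" using x by (simp add: half_space_def)
  have n: "- (\<epsilon> *\<^sub>R e) \<in> neg_half_space e" using \<epsilon> ee by (simp add: neg_half_space_def)
  have "poisson_half s e x (- (\<epsilon> *\<^sub>R e)) = K_s (real DIM('a)) s * ((x \<bullet> e) / \<epsilon>) powr s * norm (x + \<epsilon> *\<^sub>R e) powr (- real DIM('a))"
    using x n ee by (simp add: poisson_half_def)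
  moreover have "\<epsilon> powr s * ((x \<bullet> e) / \<epsilon>) powr s = (x \<bullet> e) powr s"
    using \<epsilon> x1 by (simp add: powr_divide)
  ultimately show ?thesis by (simp add: algebra_simps)
qed

lemma nn_int_cmult_real:
  fixes f :: "'a \<Rightarrow> real"
  assumes "0 \<le> c" "\<And>x. 0 \<le> f x" "f \<in> borel_measurable M"
  shows "(\<integral>\<^sup>+x. ennreal (c * f x) \<partial>M) = ennreal c * (\<integral>\<^sup>+x. ennreal (f x) \<partial>M)"
proof -
  have "(\<integral>\<^sup>+x. ennreal (c * f x) \<partial>M) = (\<integral>\<^sup>+x. ennreal c * ennreal (f x) \<partial>M)"
    using assms by (intro nn_integral_cong) (simp add: ennreal_mult)
  also have "\<dots> = ennreal c * (\<integral>\<^sup>+x. ennreal (f x) \<partial>M)"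
    using assms by (intro nn_integral_cmult) auto
  finally show ?thesis .
qed

lemma meas_norm_pow [measurable]: "(\<lambda>x::'a::euclidean_space. norm (x - p) powr a) \<in> borel_measurable borel"
proof -
  have "(\<lambda>x::'a. norm (x - p)) \<in> borel_measurable borel"
    by (intro borel_measurable_continuous_onI continuous_intros)
  then show ?thesis by measurable
qed

lemma meas_ball_pow: "(\<lambda>x::'a::euclidean_space. indicator (cball p r) x * norm (x - p) powr a) \<in> borel_measurable borel"
  by (intro borel_measurable_times borel_measurable_indicator meas_norm_pow borel_closed closed_cball)

lemma meas_nball_pow: "(\<lambda>x::'a::euclidean_space. indicator (- cball p r) x * norm (x - p) powr a) \<in> borel_measurable borel"
  by (intro borel_measurable_times borel_measurable_indicator meas_norm_pow borel_comp borel_closed closed_cball)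

lemma meas_ball_pow_e: "(\<lambda>x::'a::euclidean_space. ennreal (c * (indicator (cball p r) x * norm (x - p) powr a))) \<in> borel_measurable borel"
  using meas_ball_pow[of p r a] by measurable

lemma meas_nball_pow_e: "(\<lambda>x::'a::euclidean_space. ennreal (c * (indicator (- cball p r) x * norm (x - p) powr a))) \<in> borel_measurable borel"
  using meas_nball_pow[of p r a] by measurable

lemma g_int:
  fixes e :: "'a::euclidean_space"
  assumes e: "e \<in> Basis" and s: "0 < s" "s < 1"
  shows "(\<integral>\<^sup>+x. ennreal (indicator (half_space e) x * (poisson_lim s e x / (1 + norm x powr (real DIM('a) + 2 * s)))) \<partial>lborel) < \<infinity>"
proof -
  define N where "N = real DIM('a)"
  define K where "K = K_s N s"
  have N1: "1 \<le> N" unfolding N_def by simp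
  have Ds: "s < N" using s N1 by linarith
  have K0: "0 < K" unfolding K_def using K_pos[of s N] s N1 by simp
  let ?f1 = "\<lambda>x::'a. indicator (cball 0 1) x * norm (x - 0) powr (- (N - s))"
  let ?f2 = "\<lambda>x::'a. indicator (- cball 0 1) x * norm (x - 0) powr (- (2 * N + s))"
  have pw: "ennreal (indicator (half_space e) x * (poisson_lim s e x / (1 + norm x powr (N + 2 * s))))
      \<le> ennreal (K * ?f1 x) + ennreal (K * ?f2 x)" for x :: 'a
  proof (cases "x \<in> half_space e")
    case False then show ?thesis by simp
  next
    case True
    define n where "n = norm x"
    have x1: "0 < x \<bullet> e" using True by (simp add: half_space_def)
    have x1n: "x \<bullet> e \<le> n" using Basis_le_norm[OF e, of x] by (simp add: n_def)
    have n0: "0 < n" using x1 x1n by simp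
    define w where "w = 1 + n powr (N + 2 * s)"
    have w1: "1 \<le> w" unfolding w_def by simp
    have "poisson_lim s e x / w = K * n powr (- N) * (x \<bullet> e) powr s / w"
      by (simp add: poisson_lim_def K_def N_def n_def)
    also have "\<dots> \<le> K * n powr (- N) * n powr s / w"
      using x1 x1n K0 w1 s by (intro divide_right_mono mult_left_mono powr_mono2) auto
    also have "\<dots> = K * n powr (s - N) / w" by (simp add: powr_add[symmetric])
    finally have b: "poisson_lim s e x / w \<le> K * n powr (s - N) / w" .
    have "poisson_lim s e x / w \<le> K * ?f1 x + K * ?f2 x"
    proof (cases "n \<le> 1")
      case True
      have "K * n powr (s - N) / w \<le> K * n powr (s - N)"
        using divide_left_mono[of 1 w "K * n powr (s - N)"] w1 K0 by simp
      then show ?thesis using b True K0 by (simp add: n_def indicator_def)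
    next
      case False
      have "K * n powr (s - N) / w \<le> K * n powr (s - N) / n powr (N + 2 * s)"
        using False K0 n0 by (intro divide_left_mono mult_nonneg_nonneg mult_pos_pos) (auto simp: w_def add_pos_pos)
      also have "\<dots> = K * n powr (- (2 * N + s))"
        using n0 powr_diff[of n "s - N" "N + 2 * s", symmetric] by (simp add: algebra_simps times_divide_eq_right[symmetric] del: times_divide_eq_right)
      finally show ?thesis using b False K0 by (simp add: n_def indicator_def)
    qed
    then show ?thesis using True K0
      by (simp add: ennreal_plus[symmetric] ennreal_leI w_def n_def N_def del: ennreal_plus)
  qed
  have i1: "(\<integral>\<^sup>+x. ennreal (?f1 x) \<partial>lborel) < \<infinity>"
  proof -
    have "(\<integral>\<^sup>+x. ennreal (?f1 x) \<partial>lborel) \<le> ennreal (unit_ball_vol (real DIM('a)) * 2 powr (N - s) * 1 powr (real DIM('a) - (N - s))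
         / (1 - 2 powr ((N - s) - real DIM('a))))"
    proof (rule shell_in)
      show "0 < N - s" using Ds by simp
      show "N - s < real DIM('a)" using s by (simp add: N_def)
    qed simp
    then show ?thesis unfolding infinity_ennreal_def by (rule le_less_trans[OF _ ennreal_less_top])
  qed
  have i2: "(\<integral>\<^sup>+x. ennreal (?f2 x) \<partial>lborel) < \<infinity>"
  proof -
    have "(\<integral>\<^sup>+x. ennreal (?f2 x) \<partial>lborel) \<le> ennreal (unit_ball_vol (real DIM('a)) * 2 powr real DIM('a) * 1 powr (real DIM('a) - (2 * N + s))
         / (1 - 2 powr (real DIM('a) - (2 * N + s))))"
    proof (rule shell_out)
      show "real DIM('a) < 2 * N + s" using s N1 by (simp add: N_def)
    qed simp
    then show ?thesis unfolding infinity_ennreal_def by (rule le_less_trans[OF _ ennreal_less_top])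
  qed
  have "(\<integral>\<^sup>+x. ennreal (indicator (half_space e) x * (poisson_lim s e x / (1 + norm x powr (N + 2 * s)))) \<partial>lborel)
      \<le> (\<integral>\<^sup>+x. ennreal (K * ?f1 x) + ennreal (K * ?f2 x) \<partial>lborel)"
    by (intro nn_integral_mono pw)
  also have "\<dots> = (\<integral>\<^sup>+x. ennreal (K * ?f1 x) \<partial>lborel) + (\<integral>\<^sup>+x. ennreal (K * ?f2 x) \<partial>lborel)"
    using meas_ball_pow_e[of K 0 1 "- (N - s)"] meas_nball_pow_e[of K 0 1 "- (2 * N + s)"]
    by (intro nn_integral_add) auto
  also have "\<dots> = ennreal K * (\<integral>\<^sup>+x. ennreal (?f1 x) \<partial>lborel) + ennreal K * (\<integral>\<^sup>+x. ennreal (?f2 x) \<partial>lborel)"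
  proof -
    have "(\<integral>\<^sup>+x. ennreal (K * ?f1 x) \<partial>lborel) = ennreal K * (\<integral>\<^sup>+x. ennreal (?f1 x) \<partial>lborel)"
      by (rule nn_int_cmult_real) (use K0 meas_ball_pow[of 0 1 "- (N - s)"] in auto)
    moreover have "(\<integral>\<^sup>+x. ennreal (K * ?f2 x) \<partial>lborel) = ennreal K * (\<integral>\<^sup>+x. ennreal (?f2 x) \<partial>lborel)"
      by (rule nn_int_cmult_real) (use K0 meas_nball_pow[of 0 1 "- (2 * N + s)"] in auto)
    ultimately show ?thesis by simp
  qed
  also have "\<dots> < \<infinity>" using i1 i2 by (simp add: ennreal_mult_less_top)
  finally show ?thesis by (simp add: N_def)
qed


lemma meas_norm_pow0 [measurable]: "(\<lambda>x::'a::euclidean_space. norm x powr a) \<in> borel_measurable borel"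
  using meas_norm_pow[of 0 a] by simp

lemma meas_poisson_lim [measurable]: "(\<lambda>x::'a::euclidean_space. poisson_lim s e x) \<in> borel_measurable borel"
  unfolding poisson_lim_def by measurable

lemma poisson_lim_nonneg:
  assumes "0 < s" "s < 1"
  shows "0 \<le> poisson_lim s e (x::'a::euclidean_space)"
  using K_pos[of s "real DIM('a)"] assms unfolding poisson_lim_def by simp

lemma pois_unif:
  fixes e :: "'a::euclidean_space"
  assumes e: "e \<in> Basis" and s: "0 < s" "s < 1" and C: "compact C" "C \<subseteq> half_space e"
  shows "uniform_limit C (\<lambda>\<epsilon> x. \<epsilon> powr s * poisson_half s e x (- (\<epsilon> *\<^sub>R e))) (poisson_lim s e) (at_right 0)"
proof (rule unif_from_cont[where d = 1 and F = "\<lambda>p. K_s (real DIM('a)) s * (snd p \<bullet> e) powr s * norm (snd p + fst p *\<^sub>R e) powr (- real DIM('a))"])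
  have ee: "e \<bullet> e = 1" using e by (rule basis_inner_self)
  have pos1: "0 < snd p \<bullet> e" if "p \<in> {0..1} \<times> C" for p
    using that C by (auto simp: half_space_def)
  have pos2: "0 < norm (snd p + fst p *\<^sub>R e)" if "p \<in> {0..1} \<times> C" for p
  proof -
    have "0 < (snd p + fst p *\<^sub>R e) \<bullet> e" using pos1[OF that] that ee by (auto simp: inner_add_left)
    then have "snd p + fst p *\<^sub>R e \<noteq> 0" by auto
    then show ?thesis by simp
  qed
  show "continuous_on ({0..1} \<times> C) (\<lambda>p. K_s (real DIM('a)) s * (snd p \<bullet> e) powr s * norm (snd p + fst p *\<^sub>R e) powr (- real DIM('a)))"
  proof -
    have pos1': "\<And>x. x \<in> C \<Longrightarrow> 0 < x \<bullet> e" using C by (auto simp: half_space_def)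
    show ?thesis using pos1' pos2 by (intro continuous_intros) (auto dest: pos1')
  qed
  show "\<epsilon> powr s * poisson_half s e x (- (\<epsilon> *\<^sub>R e)) = K_s (real DIM('a)) s * (snd (\<epsilon>, x) \<bullet> e) powr s * norm (snd (\<epsilon>, x) + fst (\<epsilon>, x) *\<^sub>R e) powr (- real DIM('a))"
    if "\<epsilon> \<in> {0<..1}" "x \<in> C" for \<epsilon> x
    using pois_formula[OF e, of \<epsilon> x s] that C by auto
  show "poisson_lim s e x = K_s (real DIM('a)) s * (snd (0::real, x) \<bullet> e) powr s * norm (snd (0::real, x) + fst (0::real, x) *\<^sub>R e) powr (- real DIM('a))"
    if "x \<in> C" for x
    by (simp add: poisson_lim_def mult_ac)
qed (use C in auto)

lemma pois_L1s:
  fixes e :: "'a::euclidean_space"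
  assumes e: "e \<in> Basis" and s: "0 < s" "s < 1"
  shows "L1s_conv_at_right0 s e (\<lambda>\<epsilon> x. \<epsilon> powr s * poisson_half s e x (- (\<epsilon> *\<^sub>R e))) (poisson_lim s e)"
proof (rule L1s_generic[where G = "\<lambda>x. poisson_lim s e x / (1 + norm x powr (real DIM('a) + 2 * s))" and E = "\<lambda>_ _. 0"])
  show "(\<lambda>x. poisson_lim s e x / (1 + norm x powr (real DIM('a) + 2 * s))) \<in> borel_measurable borel"
    by measurable
  show "0 \<le> poisson_lim s e x / (1 + norm x powr (real DIM('a) + 2 * s))" for x
    using poisson_lim_nonneg[OF s, of e x] by (simp add: add_pos_nonneg)
  show "(\<integral>\<^sup>+x. ennreal (indicator (half_space e) x * (poisson_lim s e x / (1 + norm x powr (real DIM('a) + 2 * s)))) \<partial>lborel) < \<infinity>"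
    by (rule g_int[OF e s])
  show "uniform_limit C (\<lambda>\<epsilon> x. \<epsilon> powr s * poisson_half s e x (- (\<epsilon> *\<^sub>R e))) (poisson_lim s e) (at_right 0)"
    if "compact C" "C \<subseteq> half_space e" for C
    by (rule pois_unif[OF e s that])
  show "\<forall>\<^sub>F \<epsilon> in at_right 0. \<forall>x\<in>half_space e.
      \<bar>\<epsilon> powr s * poisson_half s e x (- (\<epsilon> *\<^sub>R e)) - poisson_lim s e x\<bar> / (1 + norm x powr (real DIM('a) + 2 * s))
      \<le> poisson_lim s e x / (1 + norm x powr (real DIM('a) + 2 * s)) + 0"
    using eventually_at_right_less[of "0::real"]
  proof eventually_elim
    case (elim \<epsilon>)
    show ?case
    proof
      fix x assume x: "x \<in> half_space e"
      define K where "K = K_s (real DIM('a)) s"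
      have K0: "0 < K" using K_pos[of s "real DIM('a)"] s by (simp add: K_def)
      have x1: "0 < x \<bullet> e" using x by (simp add: half_space_def)
      have nx: "0 < norm x" using x1 by auto
      have f: "\<epsilon> powr s * poisson_half s e x (- (\<epsilon> *\<^sub>R e)) = K * (x \<bullet> e) powr s * norm (x + \<epsilon> *\<^sub>R e) powr (- real DIM('a))"
        using pois_formula[OF e elim x] by (simp add: K_def)
      have "norm (x + \<epsilon> *\<^sub>R e) powr (- real DIM('a)) \<le> norm x powr (- real DIM('a))"
        using norm_plus_ge[OF e, of x \<epsilon>] x1 elim nx by (intro powr_mono2') auto
      then have fg: "K * (x \<bullet> e) powr s * norm (x + \<epsilon> *\<^sub>R e) powr (- real DIM('a)) \<le> poisson_lim s e x"
        using K0 by (simp add: poisson_lim_def K_def[symmetric] mult_ac mult_left_mono)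
      have f0: "0 \<le> K * (x \<bullet> e) powr s * norm (x + \<epsilon> *\<^sub>R e) powr (- real DIM('a))" using K0 by simp
      have "\<bar>\<epsilon> powr s * poisson_half s e x (- (\<epsilon> *\<^sub>R e)) - poisson_lim s e x\<bar> \<le> poisson_lim s e x"
        unfolding f using fg f0 by linarith
      then show "\<bar>\<epsilon> powr s * poisson_half s e x (- (\<epsilon> *\<^sub>R e)) - poisson_lim s e x\<bar> / (1 + norm x powr (real DIM('a) + 2 * s))
        \<le> poisson_lim s e x / (1 + norm x powr (real DIM('a) + 2 * s)) + 0"
        by (simp add: divide_right_mono add_pos_nonneg)
    qed
  qed
qed auto


lemma green_formula:
  fixes x e :: "'a::euclidean_space"
  assumes e: "e \<in> Basis" and \<epsilon>: "0 < \<epsilon>" and x: "x \<in> half_space e"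
  shows "green_half s e x (\<epsilon> *\<^sub>R e) = kappa_Ns (real DIM('a)) s / 2 * norm (x - \<epsilon> *\<^sub>R e) powr (2 * s - real DIM('a))
     * Ih s (- real DIM('a) / 2) (4 * (x \<bullet> e) * \<epsilon> / (norm (x - \<epsilon> *\<^sub>R e))\<^sup>2)"
proof -
  have ee: "e \<bullet> e = 1" using e by (rule basis_inner_self)
  have y: "\<epsilon> *\<^sub>R e \<in> half_space e" using \<epsilon> ee by (simp add: half_space_def)
  have c: "x \<in> half_space e \<and> \<epsilon> *\<^sub>R e \<in> half_space e" using x y by simp
  have ye: "(\<epsilon> *\<^sub>R e) \<bullet> e = \<epsilon>" using ee by simp
  show ?thesis unfolding green_half_def Ih_def if_P[OF c] ye by (rule refl)
qed

lemma reassoc_aux: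
  fixes A B C D E F G H s :: real
  assumes "H \<noteq> 0" "s \<noteq> 0"
  shows "A * (B / 2 * C * (D * (E * F * G / H) / s)) = B / 2 * E / s * F * (A * G) * (C / H) * D"
  using assms by (simp add: field_simps)

lemma green_J:
  fixes x e :: "'a::euclidean_space"
  assumes e: "e \<in> Basis" and \<epsilon>: "0 < \<epsilon>" and x: "x \<in> half_space e" and xe: "x \<noteq> \<epsilon> *\<^sub>R e"
    and s: "0 < s"
  shows "\<epsilon> powr (-s) * green_half s e x (\<epsilon> *\<^sub>R e) = K_s (real DIM('a)) s * (x \<bullet> e) powr s
     * norm (x - \<epsilon> *\<^sub>R e) powr (- real DIM('a)) * J0 s (- real DIM('a) / 2) (4 * (x \<bullet> e) * \<epsilon> / (norm (x - \<epsilon> *\<^sub>R e))\<^sup>2)"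
proof -
  define N where "N = real DIM('a)"
  define q where "q = - real DIM('a) / 2"
  define \<kappa> where "\<kappa> = kappa_Ns N s"
  define d where "d = norm (x - \<epsilon> *\<^sub>R e)"
  define x1 where "x1 = x \<bullet> e"
  define a where "a = 4 * x1 * \<epsilon> / d\<^sup>2"
  have d0: "0 < d" using xe by (simp add: d_def)
  have x10: "0 < x1" using x by (simp add: half_space_def x1_def)
  have a0: "0 < a" using d0 x10 \<epsilon> by (simp add: a_def)
  have Ih: "Ih s q a = J0 s q a * a powr s / s"
    using a0 s by (simp add: J0_def)
  have apow: "a powr s = 4 powr s * x1 powr s * \<epsilon> powr s / d powr (2 * s)"
  proof -
    have "a powr s = (4 * x1 * \<epsilon>) powr s / (d\<^sup>2) powr s"
      unfolding a_def using x10 \<epsilon> d0 by (simp add: powr_divide)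
    also have "(4 * x1 * \<epsilon>) powr s = 4 powr s * x1 powr s * \<epsilon> powr s"
      using x10 \<epsilon> by (simp add: powr_mult)
    also have "(d\<^sup>2) powr s = d powr (2 * s)"
      using d0 powr_powr[of d 2 s] by simp
    finally show ?thesis .
  qed
  have e1: "\<epsilon> powr (-s) * \<epsilon> powr s = 1" using \<epsilon> by (simp add: powr_add[symmetric])
  have e2: "d powr (2 * s - N) / d powr (2 * s) = d powr (- N)"
    using d0 by (simp add: powr_diff[symmetric])
  have "\<epsilon> powr (-s) * green_half s e x (\<epsilon> *\<^sub>R e) = \<epsilon> powr (-s) * (\<kappa> / 2 * d powr (2 * s - N) * Ih s q a)"
    using green_formula[OF e \<epsilon> x, of s] by (simp add: \<kappa>_def N_def d_def q_def a_def x1_def)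
  also have "\<dots> = \<kappa> / 2 * 4 powr s / s * x1 powr s * (\<epsilon> powr (-s) * \<epsilon> powr s) * (d powr (2 * s - N) / d powr (2 * s)) * J0 s q a"
    unfolding Ih apow using d0 s by (intro reassoc_aux) auto
  also have "\<dots> = K_s N s * x1 powr s * d powr (- N) * J0 s q a"
    unfolding e1 e2 K_eq \<kappa>_def by simp
  finally show ?thesis by (simp add: N_def d_def x1_def a_def q_def)
qed

lemma green_bound:
  fixes x e :: "'a::euclidean_space"
  assumes e: "e \<in> Basis" and \<epsilon>: "0 < \<epsilon>" and x: "x \<in> half_space e"
    and s: "0 < s" "s < 1" and N: "2 * s < real DIM('a)"
  shows "0 \<le> \<epsilon> powr (-s) * green_half s e x (\<epsilon> *\<^sub>R e)"
    "\<epsilon> powr (-s) * green_half s e x (\<epsilon> *\<^sub>R e) \<le> \<epsilon> powr (-s) * kappa_Ns (real DIM('a)) s / 2 * (1 / s + 1 / (- (s + (- real DIM('a) / 2))))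
       * norm (x - \<epsilon> *\<^sub>R e) powr (2 * s - real DIM('a))"
proof -
  define q where "q = - real DIM('a) / 2"
  define a where "a = 4 * (x \<bullet> e) * \<epsilon> / (norm (x - \<epsilon> *\<^sub>R e))\<^sup>2"
  have x10: "0 < x \<bullet> e" using x by (simp add: half_space_def)
  have a0: "0 \<le> a" using x10 \<epsilon> by (simp add: a_def)
  have q: "q \<le> 0" "s + q < 0" using N by (auto simp: q_def)
  have k0: "0 < kappa_Ns (real DIM('a)) s" using kappa_pos[of s "real DIM('a)"] s by simp
  have I0: "0 \<le> Ih s q a" by (rule Ih_nonneg[OF s(1) q(1) a0])
  have IB: "Ih s q a \<le> 1 / s + 1 / (- (s + q))" by (rule Ih_bound[OF s(1) q a0])
  have f: "\<epsilon> powr (-s) * green_half s e x (\<epsilon> *\<^sub>R e) = \<epsilon> powr (-s) * (kappa_Ns (real DIM('a)) s / 2 * norm (x - \<epsilon> *\<^sub>R e) powr (2 * s - real DIM('a)) * Ih s q a)"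
    using green_formula[OF e \<epsilon> x, of s] by (simp add: q_def a_def)
  show "0 \<le> \<epsilon> powr (-s) * green_half s e x (\<epsilon> *\<^sub>R e)"
    unfolding f using k0 I0 by simp
  have "\<epsilon> powr (-s) * (kappa_Ns (real DIM('a)) s / 2 * norm (x - \<epsilon> *\<^sub>R e) powr (2 * s - real DIM('a)) * Ih s q a)
     \<le> \<epsilon> powr (-s) * (kappa_Ns (real DIM('a)) s / 2 * norm (x - \<epsilon> *\<^sub>R e) powr (2 * s - real DIM('a)) * (1 / s + 1 / (- (s + q))))"
    using k0 IB by (intro mult_left_mono) auto
  then show "\<epsilon> powr (-s) * green_half s e x (\<epsilon> *\<^sub>R e) \<le> \<epsilon> powr (-s) * kappa_Ns (real DIM('a)) s / 2 * (1 / s + 1 / (- (s + (- real DIM('a) / 2))))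
       * norm (x - \<epsilon> *\<^sub>R e) powr (2 * s - real DIM('a))"
    unfolding f by (simp add: q_def mult_ac)
qed


lemma green_unif:
  fixes e :: "'a::euclidean_space"
  assumes e: "e \<in> Basis" and s: "0 < s" "s < 1" and N: "2 * s < real DIM('a)"
    and C: "compact C" "C \<subseteq> half_space e"
  shows "uniform_limit C (\<lambda>\<epsilon> x. \<epsilon> powr (-s) * green_half s e x (\<epsilon> *\<^sub>R e)) (poisson_lim s e) (at_right 0)"
proof -
  have ee: "e \<bullet> e = 1" using e by (rule basis_inner_self)
  have Cpos: "\<And>x. x \<in> C \<Longrightarrow> 0 < x \<bullet> e" using C by (auto simp: half_space_def)
  obtain \<delta> where \<delta>: "0 < \<delta>" "\<And>x. x \<in> C \<Longrightarrow> \<delta> \<le> x \<bullet> e"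
  proof (cases "C = {}")
    case True then show ?thesis using that[of 1] by auto
  next
    case False
    have "continuous_on C (\<lambda>x. x \<bullet> e)" by (intro continuous_intros)
    from continuous_attains_inf[OF C(1) False this]
    obtain x0 where "x0 \<in> C" "\<And>y. y \<in> C \<Longrightarrow> x0 \<bullet> e \<le> y \<bullet> e" by blast
    then show ?thesis using that[of "x0 \<bullet> e"] Cpos by blast
  qed
  obtain R where R: "0 < R" "\<And>x. x \<in> C \<Longrightarrow> norm x \<le> R"
    using compact_imp_bounded[OF C(1)] unfolding bounded_pos by blast
  define d where "d = \<delta> / 2"
  have d0: "0 < d" using \<delta> by (simp add: d_def)
  define M where "M = 4 * R * d / (\<delta> / 2)\<^sup>2"
  have M0: "0 \<le> M" using R d0 by (simp add: M_def)
  define q where "q = - real DIM('a) / 2"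
  have q0: "q \<le> 0" by (simp add: q_def)
  define K where "K = K_s (real DIM('a)) s"
  define S where "S = {0..d} \<times> C"
  define a where "a p = 4 * (snd p \<bullet> e) * fst p / (norm (snd p - fst p *\<^sub>R e))\<^sup>2" for p :: "real \<times> 'a"
  have Dlow: "\<delta> / 2 \<le> norm (snd p - fst p *\<^sub>R e)" if "p \<in> S" for p
  proof -
    have "\<delta> \<le> snd p \<bullet> e" "fst p \<le> d" using that \<delta> by (auto simp: S_def)
    then have "\<delta> / 2 \<le> (snd p - fst p *\<^sub>R e) \<bullet> e" using ee by (simp add: inner_diff_left d_def)
    also have "\<dots> \<le> norm (snd p - fst p *\<^sub>R e)" using Basis_le_norm[OF e] by (rule abs_le_D1)
    finally show ?thesis .
  qed
  have Dpos: "0 < norm (snd p - fst p *\<^sub>R e)" if "p \<in> S" for p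
    using Dlow[OF that] \<delta> by linarith
  have aM: "a p \<in> {0..M}" if "p \<in> S" for p
  proof -
    have p: "0 \<le> fst p" "fst p \<le> d" "snd p \<in> C" using that by (auto simp: S_def)
    have x1: "0 < snd p \<bullet> e" "snd p \<bullet> e \<le> R"
      using Cpos[OF p(3)] R(2)[OF p(3)] Basis_le_norm[OF e, of "snd p"] by auto
    have "0 \<le> a p" unfolding a_def using p x1 by simp
    moreover have "a p \<le> M" unfolding a_def M_def
    proof (rule frac_le)
      show "0 \<le> 4 * R * d" using R d0 by simp
      show "4 * (snd p \<bullet> e) * fst p \<le> 4 * R * d" using p x1 by (intro mult_mono) auto
      show "0 < (\<delta> / 2)\<^sup>2" using \<delta> by simp
      show "(\<delta> / 2)\<^sup>2 \<le> (norm (snd p - fst p *\<^sub>R e))\<^sup>2" using Dlow[OF that] \<delta> by (intro power_mono) auto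
    qed
    ultimately show ?thesis by simp
  qed
  have ca: "continuous_on S a"
    unfolding a_def using Dpos by (intro continuous_intros) auto
  have cJ: "continuous_on S (\<lambda>p. J0 s q (a p))"
    by (rule continuous_on_compose2[OF J0_cont[OF s(1) q0 M0] ca]) (use aM in auto)
  have c1: "continuous_on S (\<lambda>p. K * (snd p \<bullet> e) powr s * norm (snd p - fst p *\<^sub>R e) powr (- real DIM('a)))"
    using Dpos Cpos by (intro continuous_intros) (auto simp: S_def dest: Cpos)
  show ?thesis
  proof (rule unif_from_cont[OF C(1) d0, where F = "\<lambda>p. K * (snd p \<bullet> e) powr s * norm (snd p - fst p *\<^sub>R e) powr (- real DIM('a)) * J0 s q (a p)"])
    show "continuous_on ({0..d} \<times> C) (\<lambda>p. K * (snd p \<bullet> e) powr s * norm (snd p - fst p *\<^sub>R e) powr (- real DIM('a)) * J0 s q (a p))"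
      using continuous_on_mult[OF c1 cJ] by (simp add: S_def)
    fix \<epsilon> x assume \<epsilon>: "\<epsilon> \<in> {0<..d}" and x: "x \<in> C"
    have xH: "x \<in> half_space e" using x C by auto
    have "x \<noteq> \<epsilon> *\<^sub>R e"
    proof
      assume "x = \<epsilon> *\<^sub>R e"
      then have "x \<bullet> e = \<epsilon>" using ee by simp
      moreover have "\<delta> \<le> x \<bullet> e" using \<delta>(2)[OF x] .
      ultimately show False using \<epsilon> \<delta> by (simp add: d_def)
    qed
    then show "\<epsilon> powr (-s) * green_half s e x (\<epsilon> *\<^sub>R e) = K * (snd (\<epsilon>, x) \<bullet> e) powr s * norm (snd (\<epsilon>, x) - fst (\<epsilon>, x) *\<^sub>R e) powr (- real DIM('a)) * J0 s q (a (\<epsilon>, x))"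
      using green_J[OF e _ xH _ s(1), of \<epsilon>] \<epsilon> by (simp add: K_def q_def a_def)
  next
    fix x assume x: "x \<in> C"
    show "poisson_lim s e x = K * (snd (0::real, x) \<bullet> e) powr s * norm (snd (0::real, x) - fst (0::real, x) *\<^sub>R e) powr (- real DIM('a)) * J0 s q (a (0, x))"
      by (simp add: a_def J0_def poisson_lim_def K_def mult_ac)
  qed
qed

lemma norm_quarter:
  fixes x e :: "'a::euclidean_space"
  assumes e: "e \<in> Basis" and \<epsilon>: "0 < \<epsilon>" and D: "\<epsilon> / 2 < norm (x - \<epsilon> *\<^sub>R e)"
  shows "norm x / 4 \<le> norm (x - \<epsilon> *\<^sub>R e)"
proof (cases "2 * \<epsilon> \<le> norm x")
  case True
  have "norm x - norm (\<epsilon> *\<^sub>R e) \<le> norm (x - \<epsilon> *\<^sub>R e)" by (rule norm_triangle_ineq2)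
  moreover have "norm (\<epsilon> *\<^sub>R e) = \<epsilon>" using e \<epsilon> by simp
  ultimately show ?thesis using True \<epsilon> by linarith
next
  case False
  then show ?thesis using D by linarith
qed

lemma green_L1s:
  fixes e :: "'a::euclidean_space"
  assumes e: "e \<in> Basis" and s: "0 < s" "s < 1" and N: "2 * s < real DIM('a)"
  shows "L1s_conv_at_right0 s e (\<lambda>\<epsilon> x. \<epsilon> powr (-s) * green_half s e x (\<epsilon> *\<^sub>R e)) (poisson_lim s e)"
proof -
  define \<kappa> where "\<kappa> = kappa_Ns (real DIM('a)) s"
  define B where "B = 1 / s + 1 / (- (s + (- real DIM('a) / 2)))"
  define c where "c = 4 powr real DIM('a) + (1::real)"
  define \<alpha> where "\<alpha> = real DIM('a) - 2 * s"
  define E where "E \<epsilon> x = (\<epsilon> powr (-s) * \<kappa> / 2 * B) * (indicator (cball (\<epsilon> *\<^sub>R e) (\<epsilon> / 2)) x * norm (x - \<epsilon> *\<^sub>R e) powr (- \<alpha>))"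
    for \<epsilon> :: real and x :: 'a
  have k0: "0 < \<kappa>" using kappa_pos[of s "real DIM('a)"] s by (simp add: \<kappa>_def)
  have B0: "0 < B"
  proof -
    have "0 < 1 / s" using s by simp
    moreover have "0 < 1 / (- (s + (- real DIM('a) / 2)))" using N by simp
    ultimately show ?thesis unfolding B_def by linarith
  qed
  have c1: "1 \<le> c" by (simp add: c_def)
  have al: "0 < \<alpha>" "\<alpha> < real DIM('a)" using N s by (auto simp: \<alpha>_def)
  have ee: "e \<bullet> e = 1" using e by (rule basis_inner_self)
  have Hb: "half_space e \<in> sets borel" by (rule borel_open[OF half_space_open])
  show ?thesis
  proof (rule L1s_generic[where G = "\<lambda>x. c * (poisson_lim s e x / (1 + norm x powr (real DIM('a) + 2 * s)))" and E = E])
    show "(\<lambda>x. c * (poisson_lim s e x / (1 + norm x powr (real DIM('a) + 2 * s)))) \<in> borel_measurable borel"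
      by measurable
    show "0 \<le> c * (poisson_lim s e x / (1 + norm x powr (real DIM('a) + 2 * s)))" for x
      using poisson_lim_nonneg[OF s, of e x] c1 by (simp add: add_pos_nonneg)
    show "(\<integral>\<^sup>+x. ennreal (indicator (half_space e) x * (c * (poisson_lim s e x / (1 + norm x powr (real DIM('a) + 2 * s))))) \<partial>lborel) < \<infinity>"
    proof -
      have m: "(\<lambda>x. indicator (half_space e) x * (poisson_lim s e x / (1 + norm x powr (real DIM('a) + 2 * s)))) \<in> borel_measurable borel"
        using Hb by measurable
      have "(\<integral>\<^sup>+x. ennreal (indicator (half_space e) x * (c * (poisson_lim s e x / (1 + norm x powr (real DIM('a) + 2 * s))))) \<partial>lborel)
          = (\<integral>\<^sup>+x. ennreal (c * (indicator (half_space e) x * (poisson_lim s e x / (1 + norm x powr (real DIM('a) + 2 * s))))) \<partial>lborel)"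
        by (simp add: mult_ac)
      also have "\<dots> = ennreal c * (\<integral>\<^sup>+x. ennreal (indicator (half_space e) x * (poisson_lim s e x / (1 + norm x powr (real DIM('a) + 2 * s)))) \<partial>lborel)"
        by (rule nn_int_cmult_real) (use c1 m poisson_lim_nonneg[OF s] in \<open>auto intro!: divide_nonneg_nonneg mult_nonneg_nonneg add_nonneg_nonneg\<close>)
      also have "\<dots> < \<infinity>" using g_int[OF e s] by (simp add: ennreal_mult_less_top)
      finally show ?thesis .
    qed
    show "uniform_limit C (\<lambda>\<epsilon> x. \<epsilon> powr (-s) * green_half s e x (\<epsilon> *\<^sub>R e)) (poisson_lim s e) (at_right 0)"
      if "compact C" "C \<subseteq> half_space e" for C
      by (rule green_unif[OF e s N that])
    show "0 \<le> E \<epsilon> x" for \<epsilon> x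
      unfolding E_def using k0 B0 by simp
    show "E \<epsilon> \<in> borel_measurable borel" for \<epsilon>
      unfolding E_def by (intro borel_measurable_times borel_measurable_const meas_ball_pow)
    show "((\<lambda>\<epsilon>. \<integral>\<^sup>+x. ennreal (E \<epsilon> x) \<partial>lborel) \<longlongrightarrow> 0) (at_right 0)"
    proof -
      define V where "V = unit_ball_vol (real DIM('a)) * 2 powr \<alpha> / (1 - 2 powr (\<alpha> - real DIM('a)))"
      define h where "h \<epsilon> = (\<epsilon> powr (-s) * \<kappa> / 2 * B) * (V * (\<epsilon> / 2) powr (real DIM('a) - \<alpha>))" for \<epsilon> :: real
      have bnd: "(\<integral>\<^sup>+x. ennreal (E \<epsilon> x) \<partial>lborel) \<le> ennreal (h \<epsilon>)" if \<epsilon>: "0 < \<epsilon>" for \<epsilon>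
      proof -
        have "(\<integral>\<^sup>+x. ennreal (E \<epsilon> x) \<partial>lborel) = ennreal (\<epsilon> powr (-s) * \<kappa> / 2 * B) *
            (\<integral>\<^sup>+x. ennreal (indicator (cball (\<epsilon> *\<^sub>R e) (\<epsilon> / 2)) x * norm (x - \<epsilon> *\<^sub>R e) powr (- \<alpha>)) \<partial>lborel)"
          unfolding E_def by (rule nn_int_cmult_real) (use k0 B0 meas_ball_pow in auto)
        also have "\<dots> \<le> ennreal (\<epsilon> powr (-s) * \<kappa> / 2 * B) * ennreal (unit_ball_vol (real DIM('a)) * 2 powr \<alpha> * (\<epsilon> / 2) powr (real DIM('a) - \<alpha>)
         / (1 - 2 powr (\<alpha> - real DIM('a))))"
          by (intro mult_left_mono shell_in al) (use \<epsilon> in auto)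
        also have "\<dots> = ennreal (h \<epsilon>)"
        proof -
          have "0 \<le> unit_ball_vol (real DIM('a)) * 2 powr \<alpha> * (\<epsilon> / 2) powr (real DIM('a) - \<alpha>) / (1 - 2 powr (\<alpha> - real DIM('a)))"
            using al powr_less_mono[of "\<alpha> - real DIM('a)" 0 2]
            by (intro divide_nonneg_nonneg mult_nonneg_nonneg unit_ball_vol_nonneg) auto
          then show ?thesis using k0 B0 by (simp add: h_def V_def ennreal_mult[symmetric] mult_ac)
        qed
        finally show ?thesis .
      qed
      define C2 where "C2 = \<kappa> / 2 * B * V / 2 powr (2 * s)"
      have hev: "\<forall>\<^sub>F \<epsilon> in at_right 0. C2 * \<epsilon> powr s = h \<epsilon>"
        using eventually_at_right_less[of "0::real"]
      proof eventually_elim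
        case (elim \<epsilon>)
        have "(\<epsilon> / 2) powr (real DIM('a) - \<alpha>) = \<epsilon> powr (2 * s) / 2 powr (2 * s)"
          using elim by (simp add: \<alpha>_def powr_divide)
        moreover have "\<epsilon> powr (-s) * \<epsilon> powr (2 * s) = \<epsilon> powr s"
          using elim by (simp add: powr_add[symmetric])
        ultimately show ?case
          by (simp add: h_def C2_def field_simps)
      qed
      have "((\<lambda>\<epsilon>. C2 * \<epsilon> powr s) \<longlongrightarrow> C2 * 0) (at_right 0)"
        by (intro tendsto_mult tendsto_const tendsto_zero_powrI[OF tendsto_ident_at tendsto_const _ s(1)])
           (auto intro: eventually_mono[OF eventually_at_right_less])
      then have "(h \<longlongrightarrow> 0) (at_right 0)"
        using hev by (simp add: Lim_transform_eventually)
      then have hl: "((\<lambda>\<epsilon>. ennreal (h \<epsilon>)) \<longlongrightarrow> 0) (at_right 0)"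
        using tendsto_ennrealI[of h 0] by simp
      show ?thesis
      proof (rule tendsto_sandwich[OF _ _ tendsto_const hl])
        show "\<forall>\<^sub>F \<epsilon> in at_right 0. 0 \<le> (\<integral>\<^sup>+x. ennreal (E \<epsilon> x) \<partial>lborel)" by simp
        show "\<forall>\<^sub>F \<epsilon> in at_right 0. (\<integral>\<^sup>+x. ennreal (E \<epsilon> x) \<partial>lborel) \<le> ennreal (h \<epsilon>)"
          using eventually_at_right_less[of "0::real"] by eventually_elim (rule bnd)
      qed
    qed
    show "\<forall>\<^sub>F \<epsilon> in at_right 0. \<forall>x\<in>half_space e.
      \<bar>\<epsilon> powr (-s) * green_half s e x (\<epsilon> *\<^sub>R e) - poisson_lim s e x\<bar> / (1 + norm x powr (real DIM('a) + 2 * s))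
      \<le> c * (poisson_lim s e x / (1 + norm x powr (real DIM('a) + 2 * s))) + E \<epsilon> x"
      using eventually_at_right_less[of "0::real"]
    proof eventually_elim
      case (elim \<epsilon>)
      show ?case
      proof
        fix x assume x: "x \<in> half_space e"
        define f where "f = \<epsilon> powr (-s) * green_half s e x (\<epsilon> *\<^sub>R e)"
        define g where "g = poisson_lim s e x"
        define W where "W = 1 + norm x powr (real DIM('a) + 2 * s)"
        have W1: "1 \<le> W" by (simp add: W_def)
        have f0: "0 \<le> f" unfolding f_def by (rule green_bound(1)[OF e elim x s N])
        have g0: "0 \<le> g" unfolding g_def by (rule poisson_lim_nonneg[OF s])
        have E0: "0 \<le> E \<epsilon> x" unfolding E_def using k0 B0 by simp
        have "\<bar>f - g\<bar> / W \<le> c * (g / W) + E \<epsilon> x"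
        proof (cases "x \<in> cball (\<epsilon> *\<^sub>R e) (\<epsilon> / 2)")
          case True
          have fE: "f \<le> E \<epsilon> x"
            using green_bound(2)[OF e elim x s N] True
            by (simp add: f_def E_def \<kappa>_def B_def \<alpha>_def)
          have "\<bar>f - g\<bar> / W \<le> (f + g) / W" using f0 g0 W1 by (intro divide_right_mono) auto
          also have "\<dots> = f / W + g / W" by (simp add: add_divide_distrib)
          also have "f / W \<le> f" using f0 W1 by (simp add: divide_le_eq mult_le_cancel_left1 order_trans[OF _ mult_right_mono[OF W1 f0]])
          also have "g / W \<le> c * (g / W)"
          proof -
            have "0 \<le> g / W" using g0 W1 by simp
            from mult_right_mono[OF c1 this] show ?thesis by simp
          qed
          finally show ?thesis using fE by linarith
        next
          case False
          have D: "\<epsilon> / 2 < norm (x - \<epsilon> *\<^sub>R e)" using False by (simp add: dist_norm norm_minus_commute)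
          have Dq: "norm x / 4 \<le> norm (x - \<epsilon> *\<^sub>R e)" by (rule norm_quarter[OF e elim D])
          have x1: "0 < x \<bullet> e" using x by (simp add: half_space_def)
          have nx: "0 < norm x" using x1 by auto
          have xe: "x \<noteq> \<epsilon> *\<^sub>R e" using D elim by auto
          define a where "a = 4 * (x \<bullet> e) * \<epsilon> / (norm (x - \<epsilon> *\<^sub>R e))\<^sup>2"
          have a0: "0 \<le> a" using x1 elim by (simp add: a_def)
          have J1: "J0 s (- real DIM('a) / 2) a \<le> 1" by (rule J0_bounds(2)) (use s a0 in auto)
          have J0: "0 \<le> J0 s (- real DIM('a) / 2) a"
          proof -
            have "(1 + a) powr (- real DIM('a) / 2) \<le> J0 s (- real DIM('a) / 2) a"
              by (rule J0_bounds(1)) (use s a0 in auto)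
            moreover have "0 \<le> (1 + a) powr (- real DIM('a) / 2)" by simp
            ultimately show ?thesis by linarith
          qed
          define K where "K = K_s (real DIM('a)) s"
          have K0: "0 < K" using K_pos[of s "real DIM('a)"] s by (simp add: K_def)
          have "f = K * (x \<bullet> e) powr s * norm (x - \<epsilon> *\<^sub>R e) powr (- real DIM('a)) * J0 s (- real DIM('a) / 2) a"
            unfolding f_def a_def K_def by (rule green_J[OF e elim x xe s(1)])
          also have "\<dots> \<le> K * (x \<bullet> e) powr s * norm (x - \<epsilon> *\<^sub>R e) powr (- real DIM('a))"
            using K0 J1 J0 by (intro mult_right_le_one_le mult_nonneg_nonneg) auto
          also have "\<dots> \<le> K * (x \<bullet> e) powr s * (norm x / 4) powr (- real DIM('a))"
            using K0 Dq nx by (intro mult_left_mono powr_mono2') auto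
          also have "(norm x / 4) powr (- real DIM('a)) = 4 powr real DIM('a) * norm x powr (- real DIM('a))"
            using nx by (simp add: powr_divide powr_minus divide_simps)
          also have "K * (x \<bullet> e) powr s * (4 powr real DIM('a) * norm x powr (- real DIM('a))) = 4 powr real DIM('a) * g"
            by (simp add: g_def poisson_lim_def K_def mult_ac)
          finally have fg: "f \<le> 4 powr real DIM('a) * g" .
          have "\<bar>f - g\<bar> \<le> c * g" using fg f0 g0 by (simp add: c_def algebra_simps abs_le_iff)
          then have "\<bar>f - g\<bar> / W \<le> c * g / W" using W1 by (intro divide_right_mono) auto
          then show ?thesis using E0 by simp
        qed
        then show "\<bar>\<epsilon> powr (-s) * green_half s e x (\<epsilon> *\<^sub>R e) - poisson_lim s e x\<bar> / (1 + norm x powr (real DIM('a) + 2 * s))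
          \<le> c * (poisson_lim s e x / (1 + norm x powr (real DIM('a) + 2 * s))) + E \<epsilon> x"
          by (simp add: f_def g_def W_def)
      qed
    qed
  qed
qed


theorem theorem1p3:
  fixes s :: real and e :: "'a::euclidean_space"
  assumes "0 < s" "s < 1" "real DIM('a) > 2 * s" "e \<in> Basis"
  shows "L1s_conv_at_right0 s e (\<lambda>\<epsilon> x. \<epsilon> powr (-s) * green_half s e x (\<epsilon> *\<^sub>R e)) (poisson_lim s e)
    \<and> (\<forall>C. compact C \<and> C \<subseteq> half_space e \<longrightarrow>
          uniform_limit C (\<lambda>\<epsilon> x. \<epsilon> powr (-s) * green_half s e x (\<epsilon> *\<^sub>R e)) (poisson_lim s e) (at_right 0))
    \<and> L1s_conv_at_right0 s e (\<lambda>\<epsilon> x. \<epsilon> powr s * poisson_half s e x (- (\<epsilon> *\<^sub>R e))) (poisson_lim s e)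
    \<and> (\<forall>C. compact C \<and> C \<subseteq> half_space e \<longrightarrow>
          uniform_limit C (\<lambda>\<epsilon> x. \<epsilon> powr s * poisson_half s e x (- (\<epsilon> *\<^sub>R e))) (poisson_lim s e) (at_right 0))"
    using green_L1s[OF assms(4,1,2,3)] green_unif[OF assms(4,1,2,3)]
    pois_L1s[OF assms(4,1,2)] pois_unif[OF assms(4,1,2)]
  by blast

end
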